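(* Let $1<p<\infty$, let $U$ be a domain in $\mathbb{C}^n$, let $Z=\{z\in\mathbb{C}^n: z_j=0\text{ for some }1\le j\le n\}$ and $U^*=U\setminus Z$. Suppose $\lambda:U\to[0,\infty]$ is a measurable function such that the restriction $\lambda|_{U^*}$ is an admissible weight on $U^*$. Then $\lambda$ is an admissible weight on $U$.
   Context: For a domain $V\subset\mathbb{C}^n$ and a measurable $\lambda:V\to[0,\infty]$ positive a.e., $A^p(V,\lambda)$ is the space of holomorphic functions $f$ on $V$ with $\|f\|_{L^p(V,\lambda)}^p=\int_V|f|^p\lambda\,dV<\infty$. The weight $\lambda$ is admissible on $V$ if for each compact $K\subset V$ there is $C_K>0$ such that $\sup_K|f|\le C_K\|f\|_{L^p(V,\lambda)}$ for every $f\in A^p(V,\lambda)$. *)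

theory Defs
  imports "HOL-Analysis.Analysis"
begin

definition domain :: "(complex ^ 'n) set \<Rightarrow> bool" where
  "domain V \<longleftrightarrow> open V \<and> connected V \<and> V \<noteq> {}"

definition holo :: "(complex ^ 'n \<Rightarrow> complex) \<Rightarrow> (complex ^ 'n) set \<Rightarrow> bool" where
  "holo f V \<longleftrightarrow> (\<forall>z\<in>V. \<exists>L. (f has_derivative L) (at z) \<and>
       (\<forall>c x. L (\<chi> i. c * x $ i) = c * L x))"

definition coord_hyperplanes :: "(complex ^ 'n) set" where
  "coord_hyperplanes = {z. \<exists>j. z $ j = 0}"

definition wint :: "real \<Rightarrow> (complex ^ 'n) set \<Rightarrow> (complex ^ 'n \<Rightarrow> ennreal)
    \<Rightarrow> (complex ^ 'n \<Rightarrow> complex) \<Rightarrow> ennreal" where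
  "wint p V lam f = (\<integral>\<^sup>+ z. indicator V z * ennreal (norm (f z) powr p) * lam z \<partial>lebesgue)"

definition Lp_wnorm :: "real \<Rightarrow> (complex ^ 'n) set \<Rightarrow> (complex ^ 'n \<Rightarrow> ennreal)
    \<Rightarrow> (complex ^ 'n \<Rightarrow> complex) \<Rightarrow> real" where
  "Lp_wnorm p V lam f = enn2real (wint p V lam f) powr (1 / p)"

definition Bergman :: "real \<Rightarrow> (complex ^ 'n) set \<Rightarrow> (complex ^ 'n \<Rightarrow> ennreal)
    \<Rightarrow> (complex ^ 'n \<Rightarrow> complex) set" where
  "Bergman p V lam = {f. holo f V \<and> wint p V lam f < \<infinity>}"

definition weight :: "(complex ^ 'n) set \<Rightarrow> (complex ^ 'n \<Rightarrow> ennreal) \<Rightarrow> bool" where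
  "weight V lam \<longleftrightarrow> (\<lambda>z. indicator V z * lam z) \<in> borel_measurable lebesgue \<and>
     (AE z in lebesgue. z \<in> V \<longrightarrow> lam z > 0)"

definition admissible :: "real \<Rightarrow> (complex ^ 'n) set \<Rightarrow> (complex ^ 'n \<Rightarrow> ennreal) \<Rightarrow> bool" where
  "admissible p V lam \<longleftrightarrow> weight V lam \<and>
     (\<forall>K. compact K \<and> K \<subseteq> V \<longrightarrow>
        (\<exists>C>0. \<forall>f\<in>Bergman p V lam. \<forall>z\<in>K. norm (f z) \<le> C * Lp_wnorm p V lam f))"

end

theory Submission
  imports Defs "HOL-Complex_Analysis.Cauchy_Integral_Formula"
begin

lemma slice_fd:
  fixes f :: "complex^'n \<Rightarrow> complex" and z w :: "complex^'n"
  assumes "holo f U" "(\<chi> i. if i = k then \<zeta> else w$i) \<in> U"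
  shows "(\<lambda>\<zeta>. f (\<chi> i. if i = k then \<zeta> else w$i)) field_differentiable (at \<zeta>)"
proof -
  let ?u = "\<lambda>\<zeta>. (\<chi> i. if i = k then \<zeta> else w$i)"
  obtain L where L: "(f has_derivative L) (at (?u \<zeta>))" "\<forall>c x. L (\<chi> i. c * x $ i) = c * L x"
    using assms unfolding holo_def by blast
  have "linear (axis k :: complex \<Rightarrow> complex^'n)"
    by (rule linearI) (auto simp: axis_def vec_eq_iff)
  then have lin: "bounded_linear (axis k :: complex \<Rightarrow> complex^'n)"
    by (simp add: linear_conv_bounded_linear)
  have eq: "?u = (\<lambda>\<zeta>. axis k \<zeta> + (\<chi> i. if i = k then 0 else w$i))"
    by (auto simp: vec_eq_iff axis_def)
  have du: "(?u has_derivative axis k) (at \<zeta>)"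
    unfolding eq by (intro has_derivative_add_const bounded_linear.has_derivative[OF lin] has_derivative_ident)
  then have d: "((\<lambda>\<zeta>. f (?u \<zeta>)) has_derivative (\<lambda>h. L (axis k h))) (at \<zeta>)"
    using has_derivative_compose[OF du L(1)] by simp
  have Lh: "L (axis k h) = h * L (axis k 1)" for h
  proof -
    have e: "(\<chi> i. h * axis k 1 $ i) = axis k h" by (auto simp: vec_eq_iff axis_def)
    show ?thesis using L(2)[rule_format, of h "axis k 1"] unfolding e .
  qed
  have "((\<lambda>\<zeta>. f (?u \<zeta>)) has_derivative (\<lambda>h. L (axis k 1) * h)) (at \<zeta>)"
  proof -
    have "(\<lambda>h. L (axis k h)) = (\<lambda>h. L (axis k 1) * h)"
      by (rule ext) (subst Lh, rule mult.commute)
    then show ?thesis using d by metis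
  qed
  then show ?thesis unfolding field_differentiable_def has_field_derivative_def by blast
qed

lemma polydisc_bound:
  fixes f :: "complex^'n \<Rightarrow> complex" and z w :: "complex^'n"
  assumes holo: "holo f U" and sub: "{w. \<forall>j. norm (w$j - z$j) \<le> \<rho> j} \<subseteq> U"
    and pos: "\<forall>j. \<rho> j > 0"
    and B: "\<And>w. (\<forall>j. norm (w$j - z$j) = \<rho> j) \<Longrightarrow> norm (f w) \<le> B"
  shows "norm (f z) \<le> B"
proof -
  have H: "\<forall>w. (\<forall>j\<in>S. w$j = z$j) \<and> (\<forall>j. j \<notin> S \<longrightarrow> norm (w$j - z$j) = \<rho> j) \<longrightarrow> norm (f w) \<le> B"
    if "finite S" for S
    using that
  proof (induction S rule: finite_induct)
    case empty then show ?case using B by auto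
  next
    case (insert k S)
    show ?case
    proof (intro allI impI)
      fix w assume w: "(\<forall>j\<in>insert k S. w$j = z$j) \<and> (\<forall>j. j \<notin> insert k S \<longrightarrow> norm (w$j - z$j) = \<rho> j)"
      let ?g = "\<lambda>\<zeta>. f (\<chi> i. if i = k then \<zeta> else w$i)"
      have inU: "(\<chi> i. if i = k then \<zeta> else w$i) \<in> U" if "norm (\<zeta> - z$k) \<le> \<rho> k" for \<zeta>
      proof -
        have "\<forall>j. norm ((\<chi> i. if i = k then \<zeta> else w$i)$j - z$j) \<le> \<rho> j"
          using that w pos by (auto simp: less_imp_le)
        then show ?thesis using sub by blast
      qed
      have hol: "?g holomorphic_on cball (z$k) (\<rho> k)"
        unfolding holomorphic_on_def
      proof
        fix x assume "x \<in> cball (z$k) (\<rho> k)"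
        then have "norm (x - z$k) \<le> \<rho> k" by (simp add: dist_norm norm_minus_commute)
        then show "?g field_differentiable at x within cball (z $ k) (\<rho> k)"
          by (rule field_differentiable_at_within[OF slice_fd[OF holo inU]])
      qed
      have circ: "norm (?g x) \<le> B" if "norm (z$k - x) = \<rho> k" for x
      proof -
        have "(\<forall>j\<in>S. (\<chi> i. if i = k then x else w$i)$j = z$j) \<and>
          (\<forall>j. j \<notin> S \<longrightarrow> norm ((\<chi> i. if i = k then x else w$i)$j - z$j) = \<rho> j)"
          using w that insert.hyps by (auto simp: norm_minus_commute)
        then show ?thesis using insert.IH by blast
      qed
      have "norm ((deriv ^^ 0) ?g (z$k)) \<le> (fact 0) * B / \<rho> k ^ 0"
        by (rule Cauchy_inequality[OF holomorphic_on_subset[OF hol ball_subset_cball]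
          holomorphic_on_imp_continuous_on[OF hol]]) (use pos circ in auto)
      then have "norm (?g (z$k)) \<le> B" by simp
      moreover have "(\<chi> i. if i = k then z$k else w$i) = w" using w by (auto simp: vec_eq_iff)
      ultimately show "norm (f w) \<le> B" by simp
    qed
  qed
  show ?thesis using H[of UNIV] by simp
qed


lemma norm_le_sum_vec:
  fixes x :: "complex^'n"
  shows "norm x \<le> (\<Sum>i\<in>UNIV. norm (x$i))"
  unfolding norm_vec_def by (rule L2_set_le_sum) simp

lemma coord_null: "(coord_hyperplanes :: (complex^'n) set) \<in> null_sets lebesgue"
proof -
  have "negligible (\<Union>j\<in>UNIV. {x::complex^'n. axis j (1::complex) \<bullet> x = 0})"
    by (intro negligible_Union) (auto intro!: negligible_hyperplane simp: axis_eq_0_iff)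
  moreover have "(coord_hyperplanes :: (complex^'n) set) \<subseteq> (\<Union>j\<in>UNIV. {x::complex^'n. axis j (1::complex) \<bullet> x = 0})"
    unfolding coord_hyperplanes_def by (auto simp: inner_axis') (metis zero_complex.simps(1))
  ultimately show ?thesis using negligible_subset negligible_iff_null_sets by metis
qed

theorem proposition3p4:
  fixes p :: real and U :: "(complex ^ 'n) set" and lam :: "complex ^ 'n \<Rightarrow> ennreal"
  assumes "1 < p"
    and "domain U"
    and "(\<lambda>z. indicator U z * lam z) \<in> borel_measurable lebesgue"
    and "admissible p (U - coord_hyperplanes) lam"
  shows "admissible p U lam"
proof -
  let ?Z = "coord_hyperplanes :: (complex^'n) set"
  let ?V = "U - ?Z"
  have openU: "open U" using assms(2) by (simp add: domain_def)
  have wV: "weight ?V lam" and admV: "\<forall>K. compact K \<and> K \<subseteq> ?V \<longrightarrow>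
        (\<exists>C>0. \<forall>f\<in>Bergman p ?V lam. \<forall>z\<in>K. norm (f z) \<le> C * Lp_wnorm p ?V lam f)"
    using assms(4) by (auto simp: admissible_def)
  have weightU: "weight U lam"
  proof -
    have "AE z in lebesgue. z \<in> ?V \<longrightarrow> lam z > 0" using wV by (simp add: weight_def)
    moreover have "AE z in lebesgue. z \<notin> ?Z" by (rule AE_not_in[OF coord_null])
    ultimately have "AE z in lebesgue. z \<in> U \<longrightarrow> lam z > 0" by eventually_elim auto
    then show ?thesis using assms(3) by (simp add: weight_def)
  qed
  have Bsub: "f \<in> Bergman p ?V lam" and Lle: "Lp_wnorm p ?V lam f \<le> Lp_wnorm p U lam f"
    if f: "f \<in> Bergman p U lam" for f
  proof -
    have le: "wint p ?V lam f \<le> wint p U lam f"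
      unfolding wint_def
      by (intro nn_integral_mono mult_right_mono) (auto simp: indicator_def)
    have fin: "wint p U lam f < \<infinity>" using f by (simp add: Bergman_def)
    show "f \<in> Bergman p ?V lam" using f le fin by (auto simp: Bergman_def holo_def)
    have "enn2real (wint p ?V lam f) \<le> enn2real (wint p U lam f)"
      using le fin by (intro enn2real_mono) auto
    then show "Lp_wnorm p ?V lam f \<le> Lp_wnorm p U lam f"
      unfolding Lp_wnorm_def using assms(1) by (intro powr_mono2) auto
  qed
  have "\<exists>C>0. \<forall>f\<in>Bergman p U lam. \<forall>z\<in>K. norm (f z) \<le> C * Lp_wnorm p U lam f"
    if K: "compact K" "K \<subseteq> U" for K
  proof -
    obtain e where e: "e > 0" "(\<Union>x\<in>K. ball x e) \<subseteq> U"
      using compact_subset_open_imp_ball_epsilon_subset[OF K(1) openU K(2)] by blast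
    define N where "N = real CARD('n)"
    have N: "N \<ge> 1" unfolding N_def by simp
    define \<delta> where "\<delta> = e / (2 * N)"
    have dpos: "\<delta> > 0" using e N by (simp add: \<delta>_def)
    have Nd: "N * \<delta> < e" using e N by (simp add: \<delta>_def field_simps)
    define K' where "K' = {x + y |x y. x \<in> K \<and> y \<in> cball 0 (N * \<delta>)} \<inter> {w. \<forall>j. \<delta>/4 \<le> norm (w$j)}"
    have cl: "closed {w::complex^'n. \<forall>j. \<delta>/4 \<le> norm (w$j)}"
    proof -
      have "{w::complex^'n. \<forall>j. \<delta>/4 \<le> norm (w$j)} = (\<Inter>j. {w. \<delta>/4 \<le> norm (w$j)})" by auto
      moreover have "closed {w::complex^'n. \<delta>/4 \<le> norm (w$j)}" for j
        by (intro closed_Collect_le continuous_intros)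
      ultimately show ?thesis by (auto intro!: closed_INT)
    qed
    have "compact K'" unfolding K'_def
      by (intro compact_Int_closed compact_sums K(1) compact_cball cl)
    moreover have "K' \<subseteq> ?V"
    proof
      fix w assume "w \<in> K'"
      then obtain x y where xy: "w = x + y" "x \<in> K" "norm y \<le> N * \<delta>" and nz: "\<forall>j. \<delta>/4 \<le> norm (w$j)"
        unfolding K'_def by auto
      have "w \<in> ball x e" using xy Nd by (simp add: dist_norm)
      then have "w \<in> U" using e xy by blast
      moreover have "w \<notin> ?Z"
      proof
        assume "w \<in> ?Z"
        then obtain j where "w$j = 0" unfolding coord_hyperplanes_def by blast
        then show False using nz[rule_format, of j] dpos by simp
      qed
      ultimately show "w \<in> ?V" by blast
    qed
    ultimately obtain C where C: "C > 0" "\<forall>f\<in>Bergman p ?V lam. \<forall>z\<in>K'. norm (f z) \<le> C * Lp_wnorm p ?V lam f"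
      using admV by blast
    have "norm (f z) \<le> C * Lp_wnorm p U lam f" if f: "f \<in> Bergman p U lam" and z: "z \<in> K" for f z
    proof -
      define \<rho> where "\<rho> j = (if norm (z$j) \<le> \<delta>/2 then \<delta> else \<delta>/4)" for j
      have rpos: "\<forall>j. \<rho> j > 0" using dpos by (simp add: \<rho>_def)
      have rle: "\<rho> j \<le> \<delta>" for j using dpos by (simp add: \<rho>_def)
      have close: "norm (w - z) \<le> N * \<delta>" if "\<forall>j. norm (w$j - z$j) \<le> \<rho> j" for w
      proof -
        have "norm (w - z) \<le> (\<Sum>i\<in>UNIV. norm ((w - z)$i))" by (rule norm_le_sum_vec)
        also have "\<dots> \<le> of_nat (card (UNIV::'n set)) * \<delta>"
          by (rule sum_bounded_above) (use that rle in \<open>auto intro: order_trans\<close>)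
        finally show ?thesis by (simp add: N_def)
      qed
      have holoU: "holo f U" using f by (simp add: Bergman_def)
      show ?thesis
      proof (rule polydisc_bound[OF holoU _ rpos])
        show "{w. \<forall>j. norm (w$j - z$j) \<le> \<rho> j} \<subseteq> U"
        proof
          fix w assume "w \<in> {w. \<forall>j. norm (w$j - z$j) \<le> \<rho> j}"
          then have "norm (w - z) \<le> N * \<delta>" using close by blast
          then have "w \<in> ball z e" using Nd by (simp add: dist_norm norm_minus_commute)
          then show "w \<in> U" using e z by blast
        qed
      next
        fix w assume w: "\<forall>j. norm (w$j - z$j) = \<rho> j"
        have "w \<in> K'"
        proof -
          have "norm (w - z) \<le> N * \<delta>" using close w by simp
          then have "w \<in> {x + y |x y. x \<in> K \<and> y \<in> cball 0 (N * \<delta>)}"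
          proof -
            have "w = z + (w - z)" by simp
            moreover have "w - z \<in> cball 0 (N * \<delta>)" using \<open>norm (w - z) \<le> N * \<delta>\<close> by simp
            ultimately show ?thesis using z by blast
          qed
          moreover have "\<delta>/4 \<le> norm (w$j)" for j
          proof -
            have a: "norm (w$j - z$j) \<le> norm (w$j) + norm (z$j)" by (rule norm_triangle_ineq4)
            have b: "norm (z$j) - norm (w$j) \<le> norm (z$j - w$j)" by (rule norm_triangle_ineq2)
            have c: "norm (z$j - w$j) = \<rho> j" using w by (simp add: norm_minus_commute)
            show ?thesis using a b c w[rule_format, of j] dpos by (auto simp: \<rho>_def split: if_splits)
          qed
          ultimately show ?thesis unfolding K'_def by blast
        qed
        then have "norm (f w) \<le> C * Lp_wnorm p ?V lam f" using C Bsub[OF f] by blast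
        also have "\<dots> \<le> C * Lp_wnorm p U lam f" using Lle[OF f] C by simp
        finally show "norm (f w) \<le> C * Lp_wnorm p U lam f" .
      qed
    qed
    then show ?thesis using C by blast
  qed
  then show ?thesis using weightU by (simp add: admissible_def)
qed

end
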